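(* Let $B$ be a finite set of Boolean functions. Then there exists an MSO formula $\theta_{\mathit{imp}}$ over the vocabulary $\tau_{B,\mathit{imp}}$ such that for every set $\Gamma$ of propositional $B$-formulae and all $F,G\subseteq\Gamma$ it holds that $F\models G$ if and only if $\mathcal{A}_{F,G}\models\theta_{\mathit{imp}}$.
   Context: For a finite set $B$ of Boolean functions, a $B$-formula is a propositional formula built from propositional variables by applying functions $f\in B$ (0-ary functions act as constants). $F\models G$ means every assignment satisfying all formulae of $F$ satisfies all formulae of $G$. Let $\tau_B$ consist of a unary symbol $\mathrm{const}_f$ for each 0-ary $f\in B$ and a binary symbol $\mathrm{conn}_{f,i}$ for each $f\in B$, $1\le i\le\mathrm{arity}(f)$; let $\tau_{B,\mathit{imp}}=\tau_B\cup\{\mathrm{var},\mathrm{repr},\mathrm{reprPrem},\mathrm{reprConc}\}$, all new symbols unary. For sets $F,G$ of $B$-formulae, $\mathcal{A}_{F,G}$ is the $\tau_{B,\mathit{imp}}$-structure whose universe is the set of subformulae of formulae in $F\cup G$, where $\mathrm{var}(x)$ holds iff $x$ is a variable, $\mathrm{repr}(x)$ iff $x\in F\cup G$, $\mathrm{const}_f(x)$ iff $x$ is the constant $f$, $\mathrm{conn}_{f,i}(x,y)$ iff $x$ is the $i$-th argument of the function $f$ at the root of $y$, $\mathrm{reprPrem}(x)$ iff $x\in F$, and $\mathrm{reprConc}(x)$ iff $x\in G$. *)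

theory Defs
  imports Main
begin

text \<open>A Boolean function is represented as a pair (n, g) of its arity n and
  the map g on argument lists (only its values on lists of length n matter).\<close>
type_synonym boolfun = "nat \<times> (bool list \<Rightarrow> bool)"

definition arity :: "boolfun \<Rightarrow> nat" where
  "arity f = fst f"

definition apply_bf :: "boolfun \<Rightarrow> bool list \<Rightarrow> bool" where
  "apply_bf f xs = snd f xs"

text \<open>Propositional formulae over variables (natural numbers) built by applying
  Boolean functions; a 0-ary function applied to no arguments is a constant.\<close>
datatype pform = PVar nat | App boolfun "pform list"

fun is_B_formula :: "boolfun set \<Rightarrow> pform \<Rightarrow> bool" where
  "is_B_formula B (PVar v) = True"
| "is_B_formula B (App f args) =
     (f \<in> B \<and> length args = arity f \<and> (\<forall>a\<in>set args. is_B_formula B a))"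

fun eval :: "(nat \<Rightarrow> bool) \<Rightarrow> pform \<Rightarrow> bool" where
  "eval \<sigma> (PVar v) = \<sigma> v"
| "eval \<sigma> (App f args) = apply_bf f (map (eval \<sigma>) args)"

definition entails :: "pform set \<Rightarrow> pform set \<Rightarrow> bool" where
  "entails F G \<longleftrightarrow> (\<forall>\<sigma>. (\<forall>\<phi>\<in>F. eval \<sigma> \<phi>) \<longrightarrow> (\<forall>\<psi>\<in>G. eval \<sigma> \<psi>))"

fun subforms :: "pform \<Rightarrow> pform set" where
  "subforms (PVar v) = {PVar v}"
| "subforms (App f args) = insert (App f args) (\<Union>a\<in>set args. subforms a)"

text \<open>First-order variables and set (second-order) variables are both named by
  natural numbers, in separate name spaces.\<close>
datatype 'r mso =
    Rel 'r "nat list"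
  | Eq nat nat
  | Mem nat nat
  | Neg "'r mso"
  | Conj "'r mso" "'r mso"
  | Ex1 nat "'r mso"
  | Ex2 nat "'r mso"

fun sat :: "'a set \<Rightarrow> ('r \<Rightarrow> 'a list \<Rightarrow> bool) \<Rightarrow> (nat \<Rightarrow> 'a) \<Rightarrow> (nat \<Rightarrow> 'a set)
             \<Rightarrow> 'r mso \<Rightarrow> bool" where
  "sat U I \<alpha> \<beta> (Rel r xs) = I r (map \<alpha> xs)"
| "sat U I \<alpha> \<beta> (Eq i j) = (\<alpha> i = \<alpha> j)"
| "sat U I \<alpha> \<beta> (Mem i X) = (\<alpha> i \<in> \<beta> X)"
| "sat U I \<alpha> \<beta> (Neg \<phi>) = (\<not> sat U I \<alpha> \<beta> \<phi>)"
| "sat U I \<alpha> \<beta> (Conj \<phi> \<psi>) = (sat U I \<alpha> \<beta> \<phi> \<and> sat U I \<alpha> \<beta> \<psi>)"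
| "sat U I \<alpha> \<beta> (Ex1 i \<phi>) = (\<exists>a\<in>U. sat U I (\<alpha>(i := a)) \<beta> \<phi>)"
| "sat U I \<alpha> \<beta> (Ex2 X \<phi>) = (\<exists>A. A \<subseteq> U \<and> sat U I \<alpha> (\<beta>(X := A)) \<phi>)"

fun fo_free :: "'r mso \<Rightarrow> nat set" where
  "fo_free (Rel r xs) = set xs"
| "fo_free (Eq i j) = {i, j}"
| "fo_free (Mem i X) = {i}"
| "fo_free (Neg \<phi>) = fo_free \<phi>"
| "fo_free (Conj \<phi> \<psi>) = fo_free \<phi> \<union> fo_free \<psi>"
| "fo_free (Ex1 i \<phi>) = fo_free \<phi> - {i}"
| "fo_free (Ex2 X \<phi>) = fo_free \<phi>"

fun so_free :: "'r mso \<Rightarrow> nat set" where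
  "so_free (Rel r xs) = {}"
| "so_free (Eq i j) = {}"
| "so_free (Mem i X) = {X}"
| "so_free (Neg \<phi>) = so_free \<phi>"
| "so_free (Conj \<phi> \<psi>) = so_free \<phi> \<union> so_free \<psi>"
| "so_free (Ex1 i \<phi>) = so_free \<phi>"
| "so_free (Ex2 X \<phi>) = so_free \<phi> - {X}"

definition sentence :: "'r mso \<Rightarrow> bool" where
  "sentence \<phi> \<longleftrightarrow> fo_free \<phi> = {} \<and> so_free \<phi> = {}"

fun over_vocab :: "'r set \<Rightarrow> ('r \<Rightarrow> nat) \<Rightarrow> 'r mso \<Rightarrow> bool" where
  "over_vocab tau ar (Rel r xs) = (r \<in> tau \<and> length xs = ar r)"
| "over_vocab tau ar (Eq i j) = True"
| "over_vocab tau ar (Mem i X) = True"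
| "over_vocab tau ar (Neg \<phi>) = over_vocab tau ar \<phi>"
| "over_vocab tau ar (Conj \<phi> \<psi>) = (over_vocab tau ar \<phi> \<and> over_vocab tau ar \<psi>)"
| "over_vocab tau ar (Ex1 i \<phi>) = over_vocab tau ar \<phi>"
| "over_vocab tau ar (Ex2 X \<phi>) = over_vocab tau ar \<phi>"

definition models :: "'a set \<Rightarrow> ('r \<Rightarrow> 'a list \<Rightarrow> bool) \<Rightarrow> 'r mso \<Rightarrow> bool" where
  "models U I \<phi> \<longleftrightarrow> (\<forall>\<alpha> \<beta>. sat U I \<alpha> \<beta> \<phi>)"

datatype sym =
    SConst boolfun
  | SConn boolfun nat
  | SVar | SRepr | SReprPrem | SReprConc

fun sym_arity :: "sym \<Rightarrow> nat" where
  "sym_arity (SConn f i) = 2"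
| "sym_arity _ = 1"

definition tau_B :: "boolfun set \<Rightarrow> sym set" where
  "tau_B B = {SConst f | f. f \<in> B \<and> arity f = 0}
           \<union> {SConn f i | f i. f \<in> B \<and> 1 \<le> i \<and> i \<le> arity f}"

definition tau_B_imp :: "boolfun set \<Rightarrow> sym set" where
  "tau_B_imp B = tau_B B \<union> {SVar, SRepr, SReprPrem, SReprConc}"

definition univ_FG :: "pform set \<Rightarrow> pform set \<Rightarrow> pform set" where
  "univ_FG F G = (\<Union>\<phi>\<in>F \<union> G. subforms \<phi>)"

fun interp_FG :: "pform set \<Rightarrow> pform set \<Rightarrow> sym \<Rightarrow> pform list \<Rightarrow> bool" where
  "interp_FG F G SVar [x] = (\<exists>v. x = PVar v)"
| "interp_FG F G SRepr [x] = (x \<in> F \<union> G)"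
| "interp_FG F G (SConst f) [x] = (x = App f [])"
| "interp_FG F G (SConn f i) [x, y] =
     (\<exists>args. y = App f args \<and> 1 \<le> i \<and> i \<le> length args \<and> args ! (i - 1) = x)"
| "interp_FG F G SReprPrem [x] = (x \<in> F)"
| "interp_FG F G SReprConc [x] = (x \<in> G)"
| "interp_FG F G _ _ = False"

end

theory Submission
  imports Defs
begin

definition TT :: "sym mso" where "TT = Eq 0 0"
definition Or :: "sym mso \<Rightarrow> sym mso \<Rightarrow> sym mso" where "Or a b = Neg (Conj (Neg a) (Neg b))"
definition Imp :: "sym mso \<Rightarrow> sym mso \<Rightarrow> sym mso" where "Imp a b = Neg (Conj a (Neg b))"
definition Iff :: "sym mso \<Rightarrow> sym mso \<Rightarrow> sym mso" where "Iff a b = Conj (Imp a b) (Imp b a)"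
definition All :: "nat \<Rightarrow> sym mso \<Rightarrow> sym mso" where "All i a = Neg (Ex1 i (Neg a))"

fun ConjL :: "sym mso list \<Rightarrow> sym mso" where
  "ConjL [] = TT"
| "ConjL (a # as) = Conj a (ConjL as)"

definition memb :: "boolfun \<Rightarrow> nat \<Rightarrow> sym mso" where
  "memb f i = Ex1 1 (Conj (Rel (SConn f i) [1,0]) (Mem 1 0))"

fun shan :: "boolfun \<Rightarrow> nat list \<Rightarrow> bool list \<Rightarrow> sym mso" where
  "shan f [] pre = (if apply_bf f pre then TT else Neg TT)"
| "shan f (i # is) pre = Or (Conj (memb f i) (shan f is (pre @ [True])))
                            (Conj (Neg (memb f i)) (shan f is (pre @ [False])))"

definition guard :: "boolfun \<Rightarrow> sym mso" where
  "guard f = (if arity f = 0 then Rel (SConst f) [0] else Ex1 1 (Rel (SConn f 1) [1,0]))"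

definition Cf :: "boolfun \<Rightarrow> sym mso" where
  "Cf f = Imp (guard f) (Iff (Mem 0 0) (shan f [1..<arity f + 1] []))"

definition theta :: "boolfun list \<Rightarrow> sym mso" where
  "theta bs = Neg (Ex2 0 (Conj (All 0 (ConjL (map Cf bs)))
      (Conj (All 0 (Imp (Rel SReprPrem [0]) (Mem 0 0)))
            (Ex1 0 (Conj (Rel SReprConc [0]) (Neg (Mem 0 0)))))))"

lemmas conn_defs = TT_def Or_def Imp_def Iff_def All_def

lemma sat_ConjL: "sat U I \<alpha> \<beta> (ConjL xs) \<longleftrightarrow> (\<forall>x\<in>set xs. sat U I \<alpha> \<beta> x)"
  by (induction xs) (auto simp: TT_def)

lemma fo_shan: "fo_free (shan f is pre) \<subseteq> {0}" "so_free (shan f is pre) \<subseteq> {0}"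
  by (induction "is" arbitrary: pre) (auto simp: conn_defs memb_def)

lemma fo_ConjL: "\<forall>x\<in>set xs. fo_free x \<subseteq> {0} \<and> so_free x \<subseteq> {0} \<Longrightarrow>
   fo_free (ConjL xs) \<subseteq> {0} \<and> so_free (ConjL xs) \<subseteq> {0}"
  by (induction xs) (auto simp: TT_def)

lemma fo_Cf: "fo_free (Cf f) \<subseteq> {0} \<and> so_free (Cf f) \<subseteq> {0}"
  using fo_shan[of f "[1..<arity f + 1]" "[]"]
  by (auto simp: Cf_def guard_def conn_defs)

lemma sentence_theta: "sentence (theta bs)"
proof -
  have "fo_free (ConjL (map Cf bs)) \<subseteq> {0} \<and> so_free (ConjL (map Cf bs)) \<subseteq> {0}"
    by (rule fo_ConjL) (auto simp: fo_Cf)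
  then show ?thesis by (auto simp: sentence_def theta_def conn_defs)
qed

lemma tau_conn: "SConn f i \<in> tau_B_imp B \<longleftrightarrow> f \<in> B \<and> 1 \<le> i \<and> i \<le> arity f"
  unfolding tau_B_imp_def tau_B_def by blast
lemma tau_const: "SConst f \<in> tau_B_imp B \<longleftrightarrow> f \<in> B \<and> arity f = 0"
  unfolding tau_B_imp_def tau_B_def by blast
lemma tau_other: "SReprPrem \<in> tau_B_imp B" "SReprConc \<in> tau_B_imp B"
  unfolding tau_B_imp_def by auto

lemma voc_shan: "f \<in> B \<Longrightarrow> \<forall>i\<in>set is. 1 \<le> i \<and> i \<le> arity f \<Longrightarrow>
   over_vocab (tau_B_imp B) sym_arity (shan f is pre)"
  by (induction "is" arbitrary: pre) (auto simp: conn_defs memb_def tau_conn)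

lemma voc_ConjL: "\<forall>x\<in>set xs. over_vocab T ar x \<Longrightarrow> over_vocab T ar (ConjL xs)"
  by (induction xs) (auto simp: TT_def)

lemma voc_Cf: "f \<in> B \<Longrightarrow> over_vocab (tau_B_imp B) sym_arity (Cf f)"
  using voc_shan[of f B "[1..<arity f + 1]" "[]"]
  by (auto simp: Cf_def guard_def conn_defs tau_conn tau_const)

lemma voc_theta: "set bs = B \<Longrightarrow> over_vocab (tau_B_imp B) sym_arity (theta bs)"
  using voc_ConjL[of "map Cf bs" "tau_B_imp B" sym_arity] voc_Cf[of _ B]
  by (auto simp: theta_def conn_defs tau_other)

lemma subforms_self: "x \<in> subforms x"
  by (cases x) auto

lemma subforms_trans: "x \<in> subforms \<phi> \<Longrightarrow> subforms x \<subseteq> subforms \<phi>"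
  by (induction \<phi>) auto

lemma subforms_B: "x \<in> subforms \<phi> \<Longrightarrow> is_B_formula B \<phi> \<Longrightarrow> is_B_formula B x"
  by (induction \<phi>) auto

lemma univ_closed: "App f args \<in> univ_FG F G \<Longrightarrow> a \<in> set args \<Longrightarrow> a \<in> univ_FG F G"
  unfolding univ_FG_def using subforms_trans subforms_self
  by fastforce

lemma sat_memb:
  assumes "\<alpha> 0 = App f args" "1 \<le> i" "i \<le> length args" "App f args \<in> univ_FG F G"
  shows "sat (univ_FG F G) (interp_FG F G) \<alpha> \<beta> (memb f i) \<longleftrightarrow> args ! (i - 1) \<in> \<beta> 0"
proof -
  have "args ! (i - 1) \<in> univ_FG F G"
    using assms by (intro univ_closed[OF assms(4)]) auto
  then show ?thesis using assms by (auto simp: memb_def)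
qed

lemma sat_shan:
  assumes "\<alpha> 0 = App f args" "App f args \<in> univ_FG F G"
  shows "\<forall>i\<in>set is. 1 \<le> i \<and> i \<le> length args \<Longrightarrow>
    sat (univ_FG F G) (interp_FG F G) \<alpha> \<beta> (shan f is pre) \<longleftrightarrow>
    apply_bf f (pre @ map (\<lambda>i. args ! (i - 1) \<in> \<beta> 0) is)"
proof (induction "is" arbitrary: pre)
  case Nil
  then show ?case by (auto simp: TT_def)
next
  case (Cons i "is")
  then show ?case using sat_memb[of \<alpha> f args i F G \<beta>] assms
    by (auto simp: Or_def)
qed

lemma map_shift: "map (\<lambda>i. P (xs ! (i - 1))) [1..<length xs + 1] = map P xs"
proof -
  have "[1..<length xs + 1] = map Suc [0..<length xs]" by (simp add: map_Suc_upt)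
  then have "map (\<lambda>i. P (xs ! (i - 1))) [1..<length xs + 1] = map P (map (nth xs) [0..<length xs])"
    by simp
  also have "\<dots> = map P xs" by (simp add: map_nth)
  finally show ?thesis .
qed

lemma sat_guard:
  assumes "\<alpha> 0 = y" "y \<in> univ_FG F G" "is_B_formula B y" "f \<in> B"
  shows "sat (univ_FG F G) (interp_FG F G) \<alpha> \<beta> (guard f) \<longleftrightarrow> (\<exists>args. y = App f args)"
proof (cases "arity f = 0")
  case True
  then show ?thesis using assms by (cases y) (auto simp: guard_def)
next
  case False
  show ?thesis
  proof
    assume "sat (univ_FG F G) (interp_FG F G) \<alpha> \<beta> (guard f)"
    then show "\<exists>args. y = App f args" using False assms by (auto simp: guard_def)
  next
    assume "\<exists>args. y = App f args"
    then obtain args where y: "y = App f args" by blast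
    with assms have len: "length args = arity f" by auto
    with False have "args ! 0 \<in> set args" by auto
    moreover from assms(2) y have "App f args \<in> univ_FG F G" by simp
    ultimately have "args ! 0 \<in> univ_FG F G" using univ_closed[of f args F G "args ! 0"] by blast
    then show "sat (univ_FG F G) (interp_FG F G) \<alpha> \<beta> (guard f)"
      using False assms y len by (auto simp: guard_def)
  qed
qed

lemma sat_Cf:
  assumes "\<alpha> 0 = y" "y \<in> univ_FG F G" "is_B_formula B y" "f \<in> B"
  shows "sat (univ_FG F G) (interp_FG F G) \<alpha> \<beta> (Cf f) \<longleftrightarrow>
    (\<forall>args. y = App f args \<longrightarrow> (y \<in> \<beta> 0 \<longleftrightarrow> apply_bf f (map (\<lambda>a. a \<in> \<beta> 0) args)))"
proof -
  have "sat (univ_FG F G) (interp_FG F G) \<alpha> \<beta> (shan f [1..<arity f + 1] []) \<longleftrightarrow>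
        apply_bf f (map (\<lambda>a. a \<in> \<beta> 0) args)" if y: "y = App f args" for args
  proof -
    from y assms have len: "length args = arity f" by auto
    have "sat (univ_FG F G) (interp_FG F G) \<alpha> \<beta> (shan f [1..<arity f + 1] []) \<longleftrightarrow>
       apply_bf f ([] @ map (\<lambda>i. args ! (i - 1) \<in> \<beta> 0) [1..<arity f + 1])"
      using y assms len by (intro sat_shan) auto
    also have "map (\<lambda>i. args ! (i - 1) \<in> \<beta> 0) [1..<arity f + 1] = map (\<lambda>a. a \<in> \<beta> 0) args"
      using map_shift[of "\<lambda>a. a \<in> \<beta> 0" args] len by simp
    finally show ?thesis by simp
  qed
  then show ?thesis using sat_guard[of \<alpha> y F G B f \<beta>] assms
    by (auto simp: Cf_def Imp_def Iff_def)
qed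

lemma eval_A:
  assumes cons: "\<forall>y\<in>U. \<forall>f args. y = App f args \<longrightarrow> (y \<in> A \<longleftrightarrow> apply_bf f (map (\<lambda>a. a \<in> A) args))"
    and closed: "\<And>f args a. App f args \<in> U \<Longrightarrow> a \<in> set args \<Longrightarrow> a \<in> U"
  shows "x \<in> U \<Longrightarrow> (x \<in> A \<longleftrightarrow> eval (\<lambda>v. PVar v \<in> A) x)"
proof (induction x)
  case (PVar v)
  then show ?case by simp
next
  case (App f args)
  then have m: "map (\<lambda>a. a \<in> A) args = map (eval (\<lambda>v. PVar v \<in> A)) args"
    using closed by (intro map_cong) auto
  have "App f args \<in> A \<longleftrightarrow> apply_bf f (map (\<lambda>a. a \<in> A) args)"
    using cons App.prems by blast
  then show ?case using m by simp
qed

theorem lemma2: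
  fixes B :: "boolfun set"
  assumes "finite B"
  shows "\<exists>\<theta> :: sym mso. sentence \<theta> \<and> over_vocab (tau_B_imp B) sym_arity \<theta> \<and>
           (\<forall>\<Gamma> F G. (\<forall>\<phi>\<in>\<Gamma>. is_B_formula B \<phi>) \<longrightarrow> F \<subseteq> \<Gamma> \<longrightarrow> G \<subseteq> \<Gamma> \<longrightarrow>
              (entails F G \<longleftrightarrow> models (univ_FG F G) (interp_FG F G) \<theta>))"
proof -
  obtain bs where bs: "set bs = B" using finite_list[OF assms] by blast
  show ?thesis
  proof (intro exI conjI allI impI)
    show "sentence (theta bs)" by (rule sentence_theta)
    show "over_vocab (tau_B_imp B) sym_arity (theta bs)" using bs by (rule voc_theta)
    fix \<Gamma> F G
    assume \<Gamma>: "\<forall>\<phi>\<in>\<Gamma>. is_B_formula B \<phi>" and FG: "F \<subseteq> \<Gamma>" "G \<subseteq> \<Gamma>"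
    define U where "U = univ_FG F G"
    define I where "I = interp_FG F G"
    have UB: "is_B_formula B y" if "y \<in> U" for y
    proof -
      from that obtain \<phi> where \<phi>: "\<phi> \<in> F \<union> G" "y \<in> subforms \<phi>"
        unfolding U_def univ_FG_def by blast
      then have "is_B_formula B \<phi>" using \<Gamma> FG by blast
      then show ?thesis using subforms_B[OF \<phi>(2)] by blast
    qed
    have FU: "F \<subseteq> U" "G \<subseteq> U" unfolding U_def univ_FG_def
      by (auto intro: subforms_self)
    define Cons where "Cons A \<longleftrightarrow> (\<forall>y\<in>U. \<forall>f args. y = App f args \<longrightarrow>
       (y \<in> A \<longleftrightarrow> apply_bf f (map (\<lambda>a. a \<in> A) args)))" for A
    have consC: "sat U I (\<alpha>(0 := y)) (\<beta>(0 := A)) (ConjL (map Cf bs)) \<longleftrightarrow>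
       (\<forall>f args. y = App f args \<longrightarrow> (y \<in> A \<longleftrightarrow> apply_bf f (map (\<lambda>a. a \<in> A) args)))"
      if "y \<in> U" for \<alpha> \<beta> y A
    proof -
      have "sat U I (\<alpha>(0 := y)) (\<beta>(0 := A)) (ConjL (map Cf bs)) \<longleftrightarrow>
         (\<forall>f\<in>B. \<forall>args. y = App f args \<longrightarrow> (y \<in> A \<longleftrightarrow> apply_bf f (map (\<lambda>a. a \<in> A) args)))"
        using sat_Cf[of "\<alpha>(0 := y)" y F G B _ "\<beta>(0 := A)"] that UB bs
        by (auto simp: sat_ConjL U_def I_def)
      also have "\<dots> \<longleftrightarrow> (\<forall>f args. y = App f args \<longrightarrow> (y \<in> A \<longleftrightarrow> apply_bf f (map (\<lambda>a. a \<in> A) args)))"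
        using UB[OF that] by (cases y) auto
      finally show ?thesis .
    qed
    have satth: "sat U I \<alpha> \<beta> (theta bs) \<longleftrightarrow>
        \<not> (\<exists>A. A \<subseteq> U \<and> Cons A \<and> F \<subseteq> A \<and> (\<exists>x\<in>G. x \<notin> A))" for \<alpha> \<beta>
    proof -
      have "sat U I \<alpha> \<beta> (theta bs) \<longleftrightarrow>
        \<not> (\<exists>A. A \<subseteq> U \<and> (\<forall>y\<in>U. sat U I (\<alpha>(0 := y)) (\<beta>(0 := A)) (ConjL (map Cf bs)))
           \<and> (\<forall>x\<in>U. x \<in> F \<longrightarrow> x \<in> A) \<and> (\<exists>x\<in>U. x \<in> G \<and> x \<notin> A))"
        by (simp add: theta_def conn_defs I_def)
      also have "\<dots> \<longleftrightarrow> \<not> (\<exists>A. A \<subseteq> U \<and> Cons A \<and> F \<subseteq> A \<and> (\<exists>x\<in>G. x \<notin> A))"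
      proof -
        have c1: "(\<forall>y\<in>U. sat U I (\<alpha>(0 := y)) (\<beta>(0 := A)) (ConjL (map Cf bs))) \<longleftrightarrow> Cons A" for A
          unfolding Cons_def by (rule ball_cong[OF refl]) (rule consC)
        have c2: "(\<forall>x\<in>U. x \<in> F \<longrightarrow> x \<in> A) \<longleftrightarrow> F \<subseteq> A" for A using FU by blast
        have c3: "(\<exists>x\<in>U. x \<in> G \<and> x \<notin> A) \<longleftrightarrow> (\<exists>x\<in>G. x \<notin> A)" for A using FU by blast
        show ?thesis by (simp only: c1 c2 c3)
      qed
      finally show ?thesis .
    qed
    have closed: "\<And>f args a. App f args \<in> U \<Longrightarrow> a \<in> set args \<Longrightarrow> a \<in> U"
      unfolding U_def by (rule univ_closed)
    have key: "(\<exists>A. A \<subseteq> U \<and> Cons A \<and> F \<subseteq> A \<and> (\<exists>x\<in>G. x \<notin> A)) \<longleftrightarrow> \<not> entails F G"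
    proof
      assume "\<exists>A. A \<subseteq> U \<and> Cons A \<and> F \<subseteq> A \<and> (\<exists>x\<in>G. x \<notin> A)"
      then obtain A x where A: "Cons A" "F \<subseteq> A" and x: "x \<in> G" "x \<notin> A"
        by blast
      have ev: "y \<in> U \<Longrightarrow> (y \<in> A \<longleftrightarrow> eval (\<lambda>v. PVar v \<in> A) y)" for y
        by (rule eval_A[OF A(1)[unfolded Cons_def] closed])
      have "\<forall>\<phi>\<in>F. eval (\<lambda>v. PVar v \<in> A) \<phi>" using ev A(2) FU by blast
      moreover have "\<not> eval (\<lambda>v. PVar v \<in> A) x" using ev x FU by blast
      ultimately show "\<not> entails F G" using x unfolding entails_def by blast
    next
      assume "\<not> entails F G"
      then obtain \<sigma> x where s: "\<forall>\<phi>\<in>F. eval \<sigma> \<phi>" and x: "x \<in> G" "\<not> eval \<sigma> x"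
        unfolding entails_def by blast
      define A where "A = {y \<in> U. eval \<sigma> y}"
      have "Cons A" unfolding Cons_def A_def
      proof (intro ballI allI impI)
        fix y f args assume "y \<in> U" "y = App f args"
        then have m: "map (\<lambda>a. a \<in> {y \<in> U. eval \<sigma> y}) args = map (eval \<sigma>) args"
          using closed by (intro map_cong) auto
        then show "(y \<in> {y \<in> U. eval \<sigma> y}) \<longleftrightarrow>
            apply_bf f (map (\<lambda>a. a \<in> {y \<in> U. eval \<sigma> y}) args)"
          using \<open>y \<in> U\<close> \<open>y = App f args\<close> by (subst m) simp
      qed
      then show "\<exists>A. A \<subseteq> U \<and> Cons A \<and> F \<subseteq> A \<and> (\<exists>x\<in>G. x \<notin> A)"
        using s x FU unfolding A_def by (intro exI[of _ A]) (auto simp: A_def)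
    qed
    show "entails F G \<longleftrightarrow> models (univ_FG F G) (interp_FG F G) (theta bs)"
      using satth key unfolding models_def U_def[symmetric] I_def[symmetric] by blast
  qed
qed

end
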